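(* Let $A$ be a $DP$ algebra over $R$. Then $A$ admits a structure of abelian group object in $\mathbf{DPAlg}_R$ if and only if the multiplication of $A$ is identically zero ($ab=0$ for all $a,b\in A$), i.e. if and only if $A$ is an abelian group object in the category of (non-unital commutative) $R$-algebras; in that case the group operation is necessarily the addition of $A$. Moreover, if the multiplication of $A$ is zero then: (i) $\gamma_n=0$ for every $n\ge 2$ that is not a power of a prime; (ii) for every prime $p$, $\gamma_p$ is additive, $p\,\gamma_p(a)=0$ and $\gamma_p(ra)=r^p\gamma_p(a)$ for all $a\in A$, $r\in R$; (iii) for every prime $p$ and $e\ge1$, $\gamma_{p^e}=\gamma_p\circ\gamma_p\circ\cdots\circ\gamma_p$ ($e$-fold composite), and $p\,\gamma_{p^e}=0$.
   Context: Fix a commutative unital ring $R$; unadorned $\otimes$ means $\otimes_R$. An "algebra" means a commutative, not necessarily unital, $R$-algebra. A $DP$ (divided power) algebra is an algebra $A$ together with maps $\gamma_n:A\to A$ ($n\ge1$) such that for all $a,b\in A$, $r\in R$, $m,n\ge1$: $\gamma_1(a)=a$; $\gamma_n(a+b)=\gamma_n(a)+\sum_{i+j=n,\,i,j\ge1}\gamma_i(a)\gamma_j(b)+\gamma_n(b)$; $\gamma_n(ab)=a^n\gamma_n(b)$; $\gamma_n(rb)=r^n\gamma_n(b)$; $\gamma_m(a)\gamma_n(a)=\frac{(m+n)!}{m!\,n!}\gamma_{m+n}(a)$; $\gamma_m(\gamma_n(a))=\frac{(mn)!}{m!(n!)^m}\gamma_{mn}(a)$. Morphisms of $DP$ algebras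 are algebra maps commuting with all $\gamma_n$; this category is $\mathbf{DPAlg}_R$. Products in $\mathbf{DPAlg}_R$ are the products of underlying algebras with componentwise operations, and the terminal object is $0$. An abelian group object is an object with morphisms (multiplication, unit from the terminal object, inverse) satisfying the abelian group axioms. *)

theory Defs
  imports "HOL-Computational_Algebra.Primes"
begin

text \<open>A (commutative, not necessarily unital) algebra over the commutative ring of
  scalars of type 'r, with underlying set the whole type 'a, together with a family
  of operations gam n (only n >= 1 is meaningful; gam 0 is ignored everywhere).\<close>

record ('r, 'a) dp_ops =
  add  :: "'a \<Rightarrow> 'a \<Rightarrow> 'a"
  zer  :: 'a
  neg  :: "'a \<Rightarrow> 'a"
  mul  :: "'a \<Rightarrow> 'a \<Rightarrow> 'a"
  smul :: "'r \<Rightarrow> 'a \<Rightarrow> 'a"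
  gam  :: "nat \<Rightarrow> 'a \<Rightarrow> 'a"

definition nsmul :: "('r, 'a, 'z) dp_ops_scheme \<Rightarrow> nat \<Rightarrow> 'a \<Rightarrow> 'a" where
  "nsmul A k a = (add A a ^^ k) (zer A)"

definition lsum :: "('r, 'a, 'z) dp_ops_scheme \<Rightarrow> 'a list \<Rightarrow> 'a" where
  "lsum A xs = foldr (add A) xs (zer A)"

definition is_algebra :: "('r::comm_ring_1, 'a) dp_ops \<Rightarrow> bool" where
  "is_algebra A \<longleftrightarrow>
     (\<forall>a b c. add A (add A a b) c = add A a (add A b c)) \<and>
     (\<forall>a b. add A a b = add A b a) \<and>
     (\<forall>a. add A (zer A) a = a) \<and>
     (\<forall>a. add A a (neg A a) = zer A) \<and>
     (\<forall>a b c. mul A (mul A a b) c = mul A a (mul A b c)) \<and>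
     (\<forall>a b. mul A a b = mul A b a) \<and>
     (\<forall>a b c. mul A a (add A b c) = add A (mul A a b) (mul A a c)) \<and>
     (\<forall>r s a. smul A (r + s) a = add A (smul A r a) (smul A s a)) \<and>
     (\<forall>r a b. smul A r (add A a b) = add A (smul A r a) (smul A r b)) \<and>
     (\<forall>r s a. smul A (r * s) a = smul A r (smul A s a)) \<and>
     (\<forall>a. smul A 1 a = a) \<and>
     (\<forall>r a b. smul A r (mul A a b) = mul A (smul A r a) b)"

definition is_dp_algebra :: "('r::comm_ring_1, 'a) dp_ops \<Rightarrow> bool" where
  "is_dp_algebra A \<longleftrightarrow> is_algebra A \<and>
     (\<forall>a. gam A 1 a = a) \<and>
     (\<forall>n\<ge>1. \<forall>a b. gam A n (add A a b) =
        add A (gam A n a)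
          (add A (lsum A (map (\<lambda>i. mul A (gam A i a) (gam A (n - i) b)) [1..<n]))
                 (gam A n b))) \<and>
     (\<forall>n\<ge>1. \<forall>a b. gam A n (mul A a b) = mul A ((mul A a ^^ (n - 1)) a) (gam A n b)) \<and>
     (\<forall>n\<ge>1. \<forall>r b. gam A n (smul A r b) = smul A (r ^ n) (gam A n b)) \<and>
     (\<forall>m\<ge>1. \<forall>n\<ge>1. \<forall>a. mul A (gam A m a) (gam A n a) =
        nsmul A (fact (m + n) div (fact m * fact n)) (gam A (m + n) a)) \<and>
     (\<forall>m\<ge>1. \<forall>n\<ge>1. \<forall>a. gam A m (gam A n a) =
        nsmul A (fact (m * n) div (fact m * fact n ^ m)) (gam A (m * n) a))"

definition alg_hom :: "('r, 'a) dp_ops \<Rightarrow> ('r, 'b) dp_ops \<Rightarrow> ('a \<Rightarrow> 'b) \<Rightarrow> bool" where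
  "alg_hom A B f \<longleftrightarrow>
     (\<forall>x y. f (add A x y) = add B (f x) (f y)) \<and>
     (\<forall>x y. f (mul A x y) = mul B (f x) (f y)) \<and>
     (\<forall>r x. f (smul A r x) = smul B r (f x))"

definition dp_hom :: "('r, 'a) dp_ops \<Rightarrow> ('r, 'b) dp_ops \<Rightarrow> ('a \<Rightarrow> 'b) \<Rightarrow> bool" where
  "dp_hom A B f \<longleftrightarrow> alg_hom A B f \<and> (\<forall>n\<ge>1. \<forall>x. f (gam A n x) = gam B n (f x))"

definition prod_alg :: "('r, 'a) dp_ops \<Rightarrow> ('r, 'b) dp_ops \<Rightarrow> ('r, 'a \<times> 'b) dp_ops" where
  "prod_alg A B =
     \<lparr> add = (\<lambda>(a, b) (a', b'). (add A a a', add B b b')),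
       zer = (zer A, zer B),
       neg = (\<lambda>(a, b). (neg A a, neg B b)),
       mul = (\<lambda>(a, b) (a', b'). (mul A a a', mul B b b')),
       smul = (\<lambda>r (a, b). (smul A r a, smul B r b)),
       gam = (\<lambda>n (a, b). (gam A n a, gam B n b)) \<rparr>"

definition term_alg :: "('r, unit) dp_ops" where
  "term_alg = \<lparr> add = (\<lambda>_ _. ()), zer = (), neg = (\<lambda>_. ()), mul = (\<lambda>_ _. ()),
                smul = (\<lambda>_ _. ()), gam = (\<lambda>_ _. ()) \<rparr>"

text \<open>Abelian group object structure (m, e, i) on A with respect to a given notion of
  morphism hom (either alg_hom or dp_hom); the axioms are the morphism equations
  evaluated pointwise.\<close>
definition ab_group_obj ::
  "(('r, 'a \<times> 'a) dp_ops \<Rightarrow> ('r, 'a) dp_ops \<Rightarrow> ('a \<times> 'a \<Rightarrow> 'a) \<Rightarrow> bool) \<Rightarrow>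
   (('r, unit) dp_ops \<Rightarrow> ('r, 'a) dp_ops \<Rightarrow> (unit \<Rightarrow> 'a) \<Rightarrow> bool) \<Rightarrow>
   (('r, 'a) dp_ops \<Rightarrow> ('r, 'a) dp_ops \<Rightarrow> ('a \<Rightarrow> 'a) \<Rightarrow> bool) \<Rightarrow>
   ('r, 'a) dp_ops \<Rightarrow> ('a \<times> 'a \<Rightarrow> 'a) \<Rightarrow> (unit \<Rightarrow> 'a) \<Rightarrow> ('a \<Rightarrow> 'a) \<Rightarrow> bool" where
  "ab_group_obj hom2 hom0 hom1 A m e i \<longleftrightarrow>
     hom2 (prod_alg A A) A m \<and> hom0 term_alg A e \<and> hom1 A A i \<and>
     (\<forall>a b c. m (m (a, b), c) = m (a, m (b, c))) \<and>
     (\<forall>a. m (e (), a) = a \<and> m (a, e ()) = a) \<and>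
     (\<forall>a. m (a, i a) = e () \<and> m (i a, a) = e ()) \<and>
     (\<forall>a b. m (a, b) = m (b, a))"

abbreviation ab_group_obj_DP where
  "ab_group_obj_DP \<equiv> ab_group_obj dp_hom dp_hom dp_hom"

abbreviation ab_group_obj_Alg where
  "ab_group_obj_Alg \<equiv> ab_group_obj alg_hom alg_hom alg_hom"

end

theory Submission
  imports Defs
begin

lemma K_dvd:
  fixes p e i :: nat
  assumes p: "prime p" and i: "0 < i" "i < p ^ e"
  shows "p dvd (p ^ e choose i)"
proof (rule ccontr)
  assume nd: "\<not> p dvd (p ^ e choose i)"
  have pe: "p ^ e > 0" using p by (simp add: prime_gt_0_nat)
  obtain n where n: "p ^ e = Suc n" using pe by (cases "p^e") auto
  obtain k where k: "i = Suc k" using i by (cases i) auto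
  have eq: "p ^ e * (n choose k) = (p ^ e choose i) * i"
    using Suc_times_binomial_eq[of n k] n k by simp
  have "coprime p (p ^ e choose i)" using nd p by (simp add: prime_imp_coprime)
  hence "coprime (p ^ e) (p ^ e choose i)" by simp
  moreover have "p ^ e dvd (p ^ e choose i) * i" using eq by (metis dvd_triv_left)
  ultimately have "p ^ e dvd i" using coprime_dvd_mult_right_iff by blast
  thus False using i by (simp add: nat_dvd_not_less)
qed

lemma choose_shift:
  fixes p e x k :: nat
  assumes p: "prime p" and q: "q = p ^ e"
  shows "((x + q) choose k) mod p = ((x choose k) + (if q \<le> k then x choose (k - q) else 0)) mod p"
proof (induction x arbitrary: k)
  case 0
  have q1: "q \<ge> 1" using p q by (metis One_nat_def Suc_leI prime_gt_0_nat zero_less_power)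
  show ?case
  proof (cases "k = 0")
    case True thus ?thesis using q1 by simp
  next
    case False
    show ?thesis
    proof (cases "k < q")
      case True
      hence "p dvd (q choose k)" using K_dvd[OF p, of k e] False q by simp
      thus ?thesis using True False by (cases k) auto
    next
      case ge: False
      show ?thesis
      proof (cases "k = q")
        case True thus ?thesis using False prime_gt_1_nat[OF p] by (cases q) auto
      next
        case False
        with ge have qk: "q < k" by simp
        have z1: "q choose k = 0" using qk by (simp add: binomial_eq_0)
        have z2: "(0::nat) choose k = 0" using qk by (cases k) auto
        have z3: "(0::nat) choose (k - q) = 0" using qk by (cases "k - q") auto
        have le: "q \<le> k" using qk by simp
        show ?thesis by (simp only: z1 z2 z3 if_P[OF le] add_0 add_0_right mod_0)
      qed
    qed
  qed
next
  case (Suc x)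
  have q1: "q \<ge> 1" using p q by (metis One_nat_def Suc_leI prime_gt_0_nat zero_less_power)
  show ?case
  proof (cases k)
    case 0 thus ?thesis using q1 by simp
  next
    case (Suc k')
    have e1: "(Suc x + q) choose k = ((x + q) choose k') + ((x + q) choose Suc k')"
      unfolding Suc by (simp only: add_Suc binomial_Suc_Suc)
    have "((Suc x + q) choose k) mod p
        = (((x + q) choose k') mod p + ((x + q) choose Suc k') mod p) mod p"
      unfolding e1 by (rule mod_add_eq[symmetric])
    also have "\<dots> = (((x choose k') + (if q \<le> k' then x choose (k' - q) else 0)) mod p
        + ((x choose Suc k') + (if q \<le> Suc k' then x choose (Suc k' - q) else 0)) mod p) mod p"
      by (simp only: Suc.IH)
    also have "\<dots> = ((x choose k') + (if q \<le> k' then x choose (k' - q) else 0)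
        + ((x choose Suc k') + (if q \<le> Suc k' then x choose (Suc k' - q) else 0))) mod p"
      by (rule mod_add_eq)
    also have "\<dots> = ((Suc x choose k) + (if q \<le> k then Suc x choose (k - q) else 0)) mod p"
    proof -
      have "(x choose k') + (if q \<le> k' then x choose (k' - q) else 0)
        + ((x choose Suc k') + (if q \<le> Suc k' then x choose (Suc k' - q) else 0))
        = (Suc x choose k) + (if q \<le> k then Suc x choose (k - q) else 0)"
      proof (cases "q \<le> k'")
        case True
        hence d: "Suc k' - q = Suc (k' - q)" by simp
        have "Suc x choose k = (x choose k') + (x choose Suc k')" using Suc by simp
        moreover have "Suc x choose (k - q) = (x choose (k' - q)) + (x choose Suc (k' - q))"
          using Suc d by simp
        ultimately show ?thesis using True Suc d by simp
      next
        case False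
        show ?thesis
        proof (cases "q = Suc k'")
          case True
          thus ?thesis using False Suc by simp
        next
          case F2: False
          hence "\<not> q \<le> Suc k'" using False by simp
          thus ?thesis using False Suc by simp
        qed
      qed
      thus ?thesis by simp
    qed
    finally show ?thesis .
  qed
qed

lemma choose_mq:
  fixes p e m :: nat
  assumes p: "prime p"
  shows "((m * p ^ e) choose (p ^ e)) mod p = m mod p"
proof (induction m)
  case 0
  have "p ^ e > 0" using p by (simp add: prime_gt_0_nat)
  thus ?case by (cases "p ^ e") auto
next
  case (Suc m)
  have "((Suc m * p ^ e) choose (p ^ e)) mod p = ((m * p ^ e + p ^ e) choose (p ^ e)) mod p"
    by (simp add: add.commute)
  also have "\<dots> = ((m * p ^ e choose p ^ e) + 1) mod p"
    using choose_shift[OF p refl, of "m * p ^ e" e "p ^ e"] by simp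
  also have "\<dots> = (m + 1) mod p" using Suc by (metis mod_add_left_eq)
  finally show ?case by simp
qed

lemma choose_jq0:
  fixes p e j r :: nat
  assumes p: "prime p" and r: "p ^ e = Suc r"
  shows "((j * Suc r + r) choose r) mod p = 1"
proof (induction j)
  case 0 thus ?case using prime_gt_1_nat[OF p] by simp
next
  case (Suc j)
  have a: "((j * Suc r + r) + Suc r choose r) mod p = ((j * Suc r + r) choose r) mod p"
    using choose_shift[OF p r[symmetric], of "j * Suc r + r" r] by simp
  have b: "Suc j * Suc r + r = (j * Suc r + r) + Suc r" by simp
  show ?case unfolding b by (simp only: a Suc.IH)
qed

lemma choose_jq:
  fixes p e j :: nat
  assumes p: "prime p"
  shows "((j * p ^ e + (p ^ e - 1)) choose (p ^ e - 1)) mod p = 1"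
proof -
  obtain r where r: "p ^ e = Suc r" using prime_gt_0_nat[OF p]
    by (metis gr0_implies_Suc zero_less_power)
  show ?thesis using choose_jq0[OF p r, of j] r by simp
qed

definition PP :: "nat \<Rightarrow> nat \<Rightarrow> nat" where
  "PP q j = (\<Prod>i<j. (i * q + (q - 1)) choose (q - 1))"

lemma fact_mult_q:
  fixes q j :: nat
  assumes "q > 0"
  shows "fact (j * q) = fact j * fact q ^ j * PP q j"
proof (induction j)
  case 0 thus ?case by (simp add: PP_def)
next
  case (Suc j)
  let ?x = "j * q"
  have b: "fact q * fact (?x + q - q) * ((?x + q) choose q) = fact (?x + q)"
    using binomial_fact_lemma[of q "?x + q"] by simp
  obtain n where n: "?x + q = Suc n" using assms by (cases "?x + q") auto
  obtain k where k: "q = Suc k" using assms by (cases q) auto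
  have h: "(?x + q) * (n choose k) = ((?x + q) choose q) * q"
    using Suc_times_binomial_eq[of n k] unfolding n[symmetric] k[symmetric] .
  have "?x + q = Suc j * q" by simp
  with h have "(Suc j * (n choose k)) * q = ((?x + q) choose q) * q"
    by (metis mult.commute mult.assoc)
  hence c: "((?x + q) choose q) = Suc j * (n choose k)" using assms by simp
  have nk: "n = j * q + (q - 1)" "k = q - 1" using n k by auto
  have "fact (Suc j * q) = fact (?x + q)" by (simp add: add.commute)
  also have "\<dots> = fact q * fact ?x * (Suc j * (n choose k))" using b c by simp
  also have "\<dots> = fact q * (fact j * fact q ^ j * PP q j) * (Suc j * (n choose k))"
    using Suc.IH by (simp only:)
  also have "\<dots> = (Suc j * fact j) * (fact q * fact q ^ j) * (PP q j * (n choose k))"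
    by (simp only: mult_ac)
  also have "\<dots> = fact (Suc j) * fact q ^ Suc j * PP q (Suc j)"
  proof -
    have pp: "PP q (Suc j) = PP q j * (n choose k)" using nk by (simp add: PP_def)
    have fs: "fact (Suc j) = Suc j * (fact j :: nat)" by simp
    show ?thesis by (simp only: pp fs power_Suc)
  qed
  finally show ?case .
qed

lemma PP_mod:
  assumes p: "prime p"
  shows "PP (p ^ e) j mod p = 1"
proof (induction j)
  case 0 thus ?case using prime_gt_1_nat[OF p] by (simp add: PP_def)
next
  case (Suc j)
  have "PP (p ^ e) (Suc j) = PP (p ^ e) j * ((j * p^e + (p^e - 1)) choose (p^e - 1))"
    by (simp add: PP_def)
  hence "PP (p ^ e) (Suc j) mod p = ((PP (p ^ e) j mod p) * (((j * p^e + (p^e - 1)) choose (p^e - 1)) mod p)) mod p"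
    by (simp add: mod_mult_eq)
  also have "\<dots> = 1 mod p" by (simp only: Suc.IH choose_jq[OF p, of j e] mult_1)
  also have "\<dots> = 1" using prime_gt_1_nat[OF p] by simp
  finally show ?case .
qed

lemma coeff_mod:
  assumes p: "prime p"
  shows "(fact (p * p ^ e) div (fact p * fact (p ^ e) ^ p)) mod p = (1::nat)"
proof -
  have q: "p ^ e > 0" using p by (simp add: prime_gt_0_nat)
  have "fact (p * p ^ e) = fact p * fact (p ^ e) ^ p * PP (p ^ e) p"
    by (rule fact_mult_q[OF q, of p])
  moreover have "fact p * fact (p ^ e) ^ p \<noteq> (0::nat)"
    by (metis fact_nonzero mult_eq_0_iff power_eq_0_iff)
  ultimately have "fact (p * p ^ e) div (fact p * fact (p ^ e) ^ p) = PP (p ^ e) p"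
    by (metis nonzero_mult_div_cancel_left)
  thus ?thesis using PP_mod[OF p] by simp
qed

context
  fixes A :: "('r::comm_ring_1, 'a) dp_ops"
  assumes alg: "is_algebra A"
begin

lemma aA: "add A (add A a b) c = add A a (add A b c)" using alg unfolding is_algebra_def by meson
lemma aC: "add A a b = add A b a" using alg unfolding is_algebra_def by meson
lemma a0l: "add A (zer A) a = a" using alg unfolding is_algebra_def by meson
lemma a0r: "add A a (zer A) = a" using a0l aC by metis
lemma ainv: "add A a (neg A a) = zer A" using alg unfolding is_algebra_def by meson
lemma ainvl: "add A (neg A a) a = zer A" using ainv aC by metis
lemma aLC: "add A a (add A b c) = add A b (add A a c)" using aA aC by metis

lemma acancel: assumes "add A a b = add A a c" shows "b = c"
proof -
  have "add A (neg A a) (add A a b) = add A (neg A a) (add A a c)" using assms by simp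
  thus ?thesis by (simp add: aA[symmetric] ainvl a0l)
qed

lemma aidem: assumes "add A a a = a" shows "a = zer A"
  using acancel[of a a "zer A"] assms a0r by simp

lemma neg_unique: assumes "add A a b = zer A" shows "b = neg A a"
  using acancel[of a b "neg A a"] assms ainv by simp

lemma mulA: "mul A (mul A a b) c = mul A a (mul A b c)" using alg unfolding is_algebra_def by meson
lemma mulC: "mul A a b = mul A b a" using alg unfolding is_algebra_def by meson
lemma distr: "mul A a (add A b c) = add A (mul A a b) (mul A a c)" using alg unfolding is_algebra_def by meson
lemma smul_add: "smul A r (add A a b) = add A (smul A r a) (smul A r b)" using alg unfolding is_algebra_def by meson
lemma smul_mul: "smul A r (mul A a b) = mul A (smul A r a) b" using alg unfolding is_algebra_def by meson

lemma mul_zr: "mul A a (zer A) = zer A"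
  using distr[of a "zer A" "zer A"] a0l aidem by metis
lemma mul_zl: "mul A (zer A) a = zer A" using mul_zr mulC by metis
lemma smul_z: "smul A r (zer A) = zer A"
  using smul_add[of r "zer A" "zer A"] a0l aidem by metis
lemma neg_z: "neg A (zer A) = zer A"
  using neg_unique[of "zer A" "zer A"] a0l by simp
lemma neg_add: "neg A (add A a b) = add A (neg A a) (neg A b)"
proof -
  have "add A (add A a b) (add A (neg A a) (neg A b)) = zer A"
    by (metis aA aLC ainv a0l)
  thus ?thesis using neg_unique by metis
qed
lemma smul_neg: "smul A r (neg A a) = neg A (smul A r a)"
proof -
  have "add A (smul A r a) (smul A r (neg A a)) = zer A"
    using smul_add[of r a "neg A a"] ainv smul_z by simp
  thus ?thesis using neg_unique by metis
qed

lemma nsmul_0: "nsmul A 0 a = zer A" by (simp add: nsmul_def)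
lemma nsmul_Suc: "nsmul A (Suc k) a = add A a (nsmul A k a)" by (simp add: nsmul_def)
lemma nsmul_1: "nsmul A 1 a = a" by (simp add: nsmul_def a0r)
lemma nsmul_plus: "nsmul A (j + k) a = add A (nsmul A j a) (nsmul A k a)"
  by (induction j) (simp_all add: nsmul_0 nsmul_Suc a0l aA)
lemma nsmul_mult_zero: assumes "nsmul A d g = zer A" shows "nsmul A (d * t) g = zer A"
proof (induction t)
  case 0 thus ?case by (simp add: nsmul_0)
next
  case (Suc t)
  have "d * Suc t = d + d * t" by simp
  thus ?case using Suc assms nsmul_plus a0l by metis
qed

lemma nsmul_dvd_zero: assumes "nsmul A d g = zer A" "d dvd c" shows "nsmul A c g = zer A"
  using assms nsmul_mult_zero by (metis dvdE)

lemma nsmul_mod: assumes "nsmul A d g = zer A" shows "nsmul A c g = nsmul A (c mod d) g"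
proof -
  have "c = d * (c div d) + c mod d" by simp
  hence "nsmul A c g = add A (nsmul A (d * (c div d)) g) (nsmul A (c mod d) g)"
    by (metis nsmul_plus)
  thus ?thesis using nsmul_mult_zero[OF assms] a0l by simp
qed

lemma ideal_gcd:
  assumes "nsmul A n g = zer A" "n > 0"
  shows "\<exists>d>0. nsmul A d g = zer A \<and> (\<forall>c. nsmul A c g = zer A \<longrightarrow> d dvd c)"
proof -
  define d where "d = (LEAST d. d > 0 \<and> nsmul A d g = zer A)"
  have dd: "d > 0 \<and> nsmul A d g = zer A" unfolding d_def
    by (rule LeastI[of _ n]) (use assms in auto)
  have "d dvd c" if c: "nsmul A c g = zer A" for c
  proof (rule ccontr)
    assume nd: "\<not> d dvd c"
    hence pos: "c mod d > 0" by (simp add: dvd_eq_mod_eq_0)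
    have "nsmul A (c mod d) g = zer A" using nsmul_mod[of d g c] dd c by simp
    hence "(LEAST d. d > 0 \<and> nsmul A d g = zer A) \<le> c mod d"
      by (intro Least_le) (use pos in simp)
    hence "d \<le> c mod d" by (simp only: d_def[symmetric])
    moreover have "c mod d < d" using dd by simp
    ultimately show False by simp
  qed
  thus ?thesis using dd by blast
qed

lemma lsum_zero: "lsum A (map (\<lambda>i. zer A) xs) = zer A"
  by (induction xs) (simp_all add: lsum_def a0l)

end


lemma dp_alg: "is_dp_algebra A \<Longrightarrow> is_algebra A" unfolding is_dp_algebra_def by simp

lemma dp_gam_add: "is_dp_algebra A \<Longrightarrow> n \<ge> 1 \<Longrightarrow> gam A n (add A a b) =
        add A (gam A n a)
          (add A (lsum A (map (\<lambda>i. mul A (gam A i a) (gam A (n - i) b)) [1..<n]))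
                 (gam A n b))" unfolding is_dp_algebra_def by meson
lemma dp_gam_mul: "is_dp_algebra A \<Longrightarrow> n \<ge> 1 \<Longrightarrow> gam A n (mul A a b) = mul A ((mul A a ^^ (n - 1)) a) (gam A n b)"
  unfolding is_dp_algebra_def by meson
lemma dp_gam_smul: "is_dp_algebra A \<Longrightarrow> n \<ge> 1 \<Longrightarrow> gam A n (smul A r b) = smul A (r ^ n) (gam A n b)"
  unfolding is_dp_algebra_def by meson
lemma dp_gam_prod: "is_dp_algebra A \<Longrightarrow> m \<ge> 1 \<Longrightarrow> n \<ge> 1 \<Longrightarrow> mul A (gam A m a) (gam A n a) =
        nsmul A (fact (m + n) div (fact m * fact n)) (gam A (m + n) a)"
  unfolding is_dp_algebra_def by meson
lemma dp_gam_comp: "is_dp_algebra A \<Longrightarrow> m \<ge> 1 \<Longrightarrow> n \<ge> 1 \<Longrightarrow> gam A m (gam A n a) =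
        nsmul A (fact (m * n) div (fact m * fact n ^ m)) (gam A (m * n) a)"
  unfolding is_dp_algebra_def by meson

context
  fixes A :: "('r::comm_ring_1, 'a) dp_ops"
  assumes dp: "is_dp_algebra A" and mz: "\<And>a b. mul A a b = zer A"
begin

lemma alg: "is_algebra A" using dp_alg[OF dp] .

lemma gam_add: "n \<ge> 1 \<Longrightarrow> gam A n (add A a b) = add A (gam A n a) (gam A n b)"
  using dp_gam_add[OF dp, of n a b] by (simp add: mz lsum_zero[OF alg] a0l[OF alg])

lemma gam_zer: "n \<ge> 1 \<Longrightarrow> gam A n (zer A) = zer A"
  using dp_gam_mul[OF dp, of n "zer A" "zer A"] by (simp add: mz)

lemma gam_neg: "n \<ge> 1 \<Longrightarrow> gam A n (neg A a) = neg A (gam A n a)"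
proof -
  assume n: "n \<ge> 1"
  have "add A (gam A n a) (gam A n (neg A a)) = zer A"
    using gam_add[OF n, of a "neg A a"] ainv[OF alg] gam_zer[OF n] by simp
  thus ?thesis using neg_unique[OF alg] by metis
qed

lemma binom_kill: "1 \<le> i \<Longrightarrow> i < n \<Longrightarrow> nsmul A (n choose i) (gam A n a) = zer A"
proof -
  assume i: "1 \<le> i" "i < n"
  have "mul A (gam A i a) (gam A (n - i) a) =
        nsmul A (fact (i + (n - i)) div (fact i * fact (n - i))) (gam A (i + (n - i)) a)"
    using dp_gam_prod[OF dp, of i "n - i" a] i by simp
  moreover have "i + (n - i) = n" using i by simp
  moreover have "n choose i = fact n div (fact i * fact (n - i))"
    using i by (simp add: binomial_fact')
  ultimately show ?thesis by (simp add: mz)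
qed

lemma n_kill: "2 \<le> n \<Longrightarrow> nsmul A n (gam A n a) = zer A"
  using binom_kill[of 1 n a] by simp


lemma part_i:
  assumes n: "2 \<le> n" and np: "\<not> (\<exists>p k. prime p \<and> n = p ^ k)"
  shows "gam A n a = zer A"
proof -
  let ?g = "gam A n a"
  obtain d where d: "d > 0" "nsmul A d ?g = zer A" "\<And>c. nsmul A c ?g = zer A \<Longrightarrow> d dvd c"
    using ideal_gcd[OF alg n_kill[OF n]] n by auto
  have dC: "d dvd (n choose i)" if "1 \<le> i" "i < n" for i using d(3) binom_kill that by blast
  have "d = 1"
  proof (rule ccontr)
    assume "d \<noteq> 1"
    then obtain p where p: "prime p" "p dvd d" using prime_factor_nat by blast
    have n0: "n \<noteq> 0" using n by simp
    have nu: "\<not> is_unit p" using prime_gt_1_nat[OF p(1)] by simp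
    obtain m where nm: "n = p ^ multiplicity p n * m" "\<not> p dvd m"
      using multiplicity_decompose'[OF n0 nu] by blast
    let ?q = "p ^ multiplicity p n"
    have m1: "m \<noteq> 1" using np nm p(1) by auto
    have m0: "m \<noteq> 0" using nm(1) n0 by (metis mult_0_right)
    have q1: "?q \<ge> 1" using p(1) prime_gt_0_nat by (simp add: Suc_le_eq)
    have qn: "?q < n"
    proof -
      have "m \<ge> 2" using m1 m0 by simp
      hence "?q * 2 \<le> ?q * m" by simp
      thus ?thesis using nm(1) q1 by simp
    qed
    have "p dvd (n choose ?q)" using dC[OF q1 qn] p(2) dvd_trans by blast
    moreover have "(n choose ?q) mod p = m mod p"
      using choose_mq[OF p(1), of m "multiplicity p n"] nm(1) by (simp add: mult.commute)
    ultimately show False using nm(2) by (simp add: dvd_eq_mod_eq_0)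
  qed
  thus ?thesis using d(2) nsmul_1[OF alg] by simp
qed

lemma pkill:
  assumes p: "prime p" and k: "k \<ge> 1"
  shows "nsmul A p (gam A (p ^ k) a) = zer A"
proof -
  let ?g = "gam A (p ^ k) a"
  define q where "q = p ^ (k - 1)"
  have pq: "p * q = p ^ k" using k unfolding q_def by (cases k) auto
  have p2: "p \<ge> 2" using prime_ge_2_nat[OF p] .
  have q1: "q \<ge> 1" unfolding q_def using p prime_gt_0_nat by (simp add: Suc_le_eq)
  have "p * 1 \<le> p * q" using q1 by (rule mult_le_mono2)
  hence pk2: "p ^ k \<ge> 2" using pq p2 by simp
  obtain d where d: "d > 0" "nsmul A d ?g = zer A" "\<And>c. nsmul A c ?g = zer A \<Longrightarrow> d dvd c"
    using ideal_gcd[OF alg n_kill[OF pk2, of a]] pk2 p2 by auto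
  define u where "u = (p * q - 1) choose (q - 1)"
  have C: "(p * q choose q) = p * u"
  proof -
    have "p * q > 0" using p2 q1 by simp
    hence pq1: "Suc (p * q - 1) = p * q" by simp
    have q1': "Suc (q - 1) = q" using q1 by simp
    have "Suc (p * q - 1) * u = (Suc (p * q - 1) choose Suc (q - 1)) * Suc (q - 1)"
      unfolding u_def by (rule Suc_times_binomial_eq)
    hence "(p * u) * q = (p * q choose q) * q" unfolding pq1 q1' by (simp add: ac_simps)
    thus ?thesis using q1 by simp
  qed
  have um: "u mod p = 1"
  proof -
    have "(p - 1) * q + (q - 1) = p * q - 1" using p2 q1 by (simp add: algebra_simps diff_mult_distrib)
    thus ?thesis using choose_jq[OF p, of "p - 1" "k - 1"] unfolding u_def q_def by simp
  qed
  have qlt: "q < p * q" using p2 q1 by simp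
  have "d dvd (p * q choose q)" using d(3) binom_kill[OF q1 qlt, of a] pq by simp
  hence d1: "d dvd p * u" using C by simp
  have d2: "d dvd p * q" using d(3) n_kill[OF pk2] pq by simp
  have "coprime u p"
  proof -
    have "\<not> p dvd u" using um p2 by (metis dvd_eq_mod_eq_0 zero_neq_one)
    thus ?thesis using p by (simp add: prime_imp_coprime coprime_commute)
  qed
  hence "coprime u q" unfolding q_def by simp
  hence "gcd (p * u) (p * q) = p" by (simp add: gcd_mult_distrib_nat[symmetric])
  hence "d dvd p" using d1 d2 by (metis gcd_greatest)
  thus ?thesis using nsmul_dvd_zero[OF alg d(2)] by blast
qed

lemma part_iii:
  assumes p: "prime p"
  shows "gam A (p ^ Suc e) = gam A p ^^ Suc e"
proof (induction e)
  case 0 thus ?case by simp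
next
  case (Suc e)
  show ?case
  proof
    fix x
    have p1: "p \<ge> 1" using prime_gt_0_nat[OF p] by simp
    have q1: "p ^ Suc e \<ge> 1" using prime_gt_0_nat[OF p] by (simp add: Suc_le_eq)
    let ?c = "fact (p * p ^ Suc e) div (fact p * fact (p ^ Suc e) ^ p)"
    let ?h = "gam A (p ^ Suc (Suc e)) x"
    have "(gam A p ^^ Suc (Suc e)) x = gam A p ((gam A p ^^ Suc e) x)" by simp
    also have "\<dots> = gam A p (gam A (p ^ Suc e) x)" using Suc.IH by simp
    also have "\<dots> = nsmul A ?c (gam A (p * p ^ Suc e) x)"
      using dp_gam_comp[OF dp p1 q1] .
    also have "\<dots> = nsmul A ?c ?h" by simp
    also have "\<dots> = nsmul A (?c mod p) ?h"
      using nsmul_mod[OF alg pkill[OF p, of "Suc (Suc e)" x]] by simp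
    also have "\<dots> = ?h" using coeff_mod[OF p, of "Suc e"] nsmul_1[OF alg] by simp
    finally show "gam A (p ^ Suc (Suc e)) x = (gam A p ^^ Suc (Suc e)) x" by simp
  qed
qed
end


lemma grp_fwd:
  fixes A :: "('r::comm_ring_1, 'a) dp_ops"
  assumes alg: "is_algebra A" and G: "ab_group_obj_Alg A m e i"
  shows "(\<forall>a b. m (a, b) = add A a b) \<and> (\<forall>a b. mul A a b = zer A)"
proof -
  have hm: "alg_hom (prod_alg A A) A m" and he: "alg_hom term_alg A e"
    and unit: "\<And>a. m (e (), a) = a \<and> m (a, e ()) = a"
    using G unfolding ab_group_obj_def by auto
  have "e (add (term_alg :: ('r, unit) dp_ops) () ()) = add A (e ()) (e ())" using he unfolding alg_hom_def by meson
  moreover have "add (term_alg :: ('r, unit) dp_ops) () () = ()" by (simp add: term_alg_def)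
  ultimately have e0: "e () = zer A" using aidem[OF alg] by metis
  have madd: "\<And>x y. m (add (prod_alg A A) x y) = add A (m x) (m y)"
    and mmul: "\<And>x y. m (mul (prod_alg A A) x y) = mul A (m x) (m y)"
    using hm unfolding alg_hom_def by meson+
  have mab: "m (a, b) = add A a b" for a b
  proof -
    have "add (prod_alg A A) (a, zer A) (zer A, b) = (a, b)"
      by (simp add: prod_alg_def a0l[OF alg] a0r[OF alg])
    thus ?thesis using madd[of "(a, zer A)" "(zer A, b)"] unit e0 by metis
  qed
  have "mul A a b = zer A" for a b
  proof -
    have "mul (prod_alg A A) (a, zer A) (zer A, b) = (zer A, zer A)"
      by (simp add: prod_alg_def mul_zr[OF alg] mul_zl[OF alg])
    hence "m (zer A, zer A) = mul A a b" using mmul[of "(a, zer A)" "(zer A, b)"] unit e0 by metis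
    thus ?thesis using mab a0l[OF alg] by metis
  qed
  thus ?thesis using mab by blast
qed

lemma dp2alg: "ab_group_obj_DP A m e i \<Longrightarrow> ab_group_obj_Alg A m e i"
  unfolding ab_group_obj_def dp_hom_def by blast

lemma grp_bwd:
  fixes A :: "('r::comm_ring_1, 'a) dp_ops"
  assumes dp: "is_dp_algebra A" and mz: "\<And>a b. mul A a b = zer A"
  shows "ab_group_obj_DP A (\<lambda>(a, b). add A a b) (\<lambda>_. zer A) (neg A)"
proof -
  have alg: "is_algebra A" using dp_alg[OF dp] .
  note AC = aA[OF alg] aC[OF alg] aLC[OF alg]
  have h2: "dp_hom (prod_alg A A) A (\<lambda>(a, b). add A a b)"
    unfolding dp_hom_def alg_hom_def prod_alg_def
    by (auto simp: AC mz a0l[OF alg] smul_add[OF alg] gam_add[OF dp mz])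
  have h0: "dp_hom term_alg A (\<lambda>_. zer A)"
    unfolding dp_hom_def alg_hom_def term_alg_def
    by (auto simp: mz a0l[OF alg] smul_z[OF alg] gam_zer[OF dp mz])
  have h1: "dp_hom A A (neg A)"
    unfolding dp_hom_def alg_hom_def
    by (auto simp: mz neg_add[OF alg] neg_z[OF alg] smul_neg[OF alg] gam_neg[OF dp mz])
  show ?thesis unfolding ab_group_obj_def
    using h2 h0 h1 by (auto simp: AC a0l[OF alg] a0r[OF alg] ainv[OF alg] ainvl[OF alg])
qed

theorem mainTheorem1:
  fixes A :: "('r::comm_ring_1, 'a) dp_ops"
  assumes "is_dp_algebra A"
  shows "((\<exists>m e i. ab_group_obj_DP A m e i) \<longleftrightarrow> (\<forall>a b. mul A a b = zer A))
    \<and> ((\<forall>a b. mul A a b = zer A) \<longleftrightarrow> (\<exists>m e i. ab_group_obj_Alg A m e i))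
    \<and> (\<forall>m e i. ab_group_obj_DP A m e i \<longrightarrow> (\<forall>a b. m (a, b) = add A a b))
    \<and> ((\<forall>a b. mul A a b = zer A) \<longrightarrow>
        (\<forall>n::nat. n \<ge> 2 \<and> \<not> (\<exists>p k. prime p \<and> n = p ^ k) \<longrightarrow> (\<forall>a. gam A n a = zer A))
      \<and> (\<forall>p::nat. prime p \<longrightarrow>
           (\<forall>a b. gam A p (add A a b) = add A (gam A p a) (gam A p b))
         \<and> (\<forall>a. nsmul A p (gam A p a) = zer A)
         \<and> (\<forall>r a. gam A p (smul A r a) = smul A (r ^ p) (gam A p a)))
      \<and> (\<forall>(p::nat) (e::nat). prime p \<and> e \<ge> 1 \<longrightarrow>
           gam A (p ^ e) = (gam A p ^^ e)
         \<and> (\<forall>a. nsmul A p (gam A (p ^ e) a) = zer A)))"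
proof -
  have alg: "is_algebra A" using dp_alg[OF assms] .
  have fwd: "(\<forall>a b. m (a, b) = add A a b) \<and> (\<forall>a b. mul A a b = zer A)"
    if "ab_group_obj_DP A m e i" for m e i using grp_fwd[OF alg dp2alg[OF that]] .
  have fwd2: "\<forall>a b. mul A a b = zer A" if "ab_group_obj_Alg A m e i" for m e i
    using grp_fwd[OF alg that] by blast
  have bwd: "ab_group_obj_DP A (\<lambda>(a, b). add A a b) (\<lambda>_. zer A) (neg A)"
    if "\<forall>a b. mul A a b = zer A" using grp_bwd[OF assms] that by blast
  have P1: "(\<exists>m e i. ab_group_obj_DP A m e i) \<longleftrightarrow> (\<forall>a b. mul A a b = zer A)"
    using fwd bwd by blast
  have P2: "(\<forall>a b. mul A a b = zer A) \<longleftrightarrow> (\<exists>m e i. ab_group_obj_Alg A m e i)"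
    using fwd2 bwd dp2alg by blast
  have P3: "\<forall>m e i. ab_group_obj_DP A m e i \<longrightarrow> (\<forall>a b. m (a, b) = add A a b)"
    using fwd by blast
  have P4: "(\<forall>n::nat. n \<ge> 2 \<and> \<not> (\<exists>p k. prime p \<and> n = p ^ k) \<longrightarrow> (\<forall>a. gam A n a = zer A))
      \<and> (\<forall>p::nat. prime p \<longrightarrow>
           (\<forall>a b. gam A p (add A a b) = add A (gam A p a) (gam A p b))
         \<and> (\<forall>a. nsmul A p (gam A p a) = zer A)
         \<and> (\<forall>r a. gam A p (smul A r a) = smul A (r ^ p) (gam A p a)))
      \<and> (\<forall>(p::nat) (e::nat). prime p \<and> e \<ge> 1 \<longrightarrow>
           gam A (p ^ e) = (gam A p ^^ e)
         \<and> (\<forall>a. nsmul A p (gam A (p ^ e) a) = zer A))"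
    if mz0: "\<forall>a b. mul A a b = zer A"
  proof -
    have mz: "\<And>a b. mul A a b = zer A" using mz0 by blast
    have Q1: "\<forall>n::nat. n \<ge> 2 \<and> \<not> (\<exists>p k. prime p \<and> n = p ^ k) \<longrightarrow> (\<forall>a. gam A n a = zer A)"
      using part_i[OF assms mz] by blast
    have Q2: "(\<forall>a b. gam A p (add A a b) = add A (gam A p a) (gam A p b))
         \<and> (\<forall>a. nsmul A p (gam A p a) = zer A)
         \<and> (\<forall>r a. gam A p (smul A r a) = smul A (r ^ p) (gam A p a))" if p: "prime p" for p :: nat
    proof -
      have p1: "p \<ge> 1" using prime_gt_0_nat[OF p] by simp
      show ?thesis using gam_add[OF assms mz p1] pkill[OF assms mz p, of 1] dp_gam_smul[OF assms p1] by simp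
    qed
    have Q3: "gam A (p ^ e) = (gam A p ^^ e) \<and> (\<forall>a. nsmul A p (gam A (p ^ e) a) = zer A)"
      if p: "prime p" and e: "e \<ge> 1" for p e :: nat
    proof -
      obtain e' where e': "e = Suc e'" using e by (cases e) auto
      show ?thesis using part_iii[OF assms mz p, of e'] pkill[OF assms mz p e] e' by simp
    qed
    show ?thesis using Q1 Q2 Q3 by blast
  qed
  show ?thesis using P1 P2 P3 P4 by blast
qed

end
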